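(* Let $(G,+,0,\ge)$ be a linearly ordered Abelian group and let $n$ be a natural number. Then every nonnegative sum-symmetric matrix $T\in G^{n\times n}$ is the sum of finitely many nonnegative circuit matrices in $G^{n\times n}$.
   Context: A linearly ordered Abelian group is an Abelian group $(G,+,0)$ with a linear (total) order $\ge$ on $G$ such that for all $a,b\in G$ one has $a\ge b$ if and only if $a-b\ge 0$. Write $[n]:=\{1,\dots,n\}$. A matrix $T=(t_{ij})_{i,j\in[n]}\in G^{n\times n}$ is nonnegative if all $t_{ij}\ge 0$. It is sum-symmetric if for each $i\in[n]$ the row sum $\sum_{j\in[n]}t_{ij}$ equals the column sum $\sum_{j\in[n]}t_{ji}$. A circuit matrix is a matrix $C^{J,\pi,c}=(c_{ij})_{i,j\in[n]}\in G^{n\times n}$ for which there exist $c\in G$, a set $J\subseteq[n]$ and a cyclic permutation $\pi$ of $J$ (a permutation of $J$ consisting of a single cycle through all elements of $J$) such that for all $i,j\in[n]$, $c_{ij}=c$ if $j=\pi(i)$ and $i\in J$, and $c_{ij}=0$ otherwise. The circuit matrix is nonnegative when $c\ge 0$. *)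

theory Defs
  imports "HOL-Combinatorics.Permutations"
begin

text \<open>Matrices in G^{n x n} are represented as functions nat => nat => 'a,
  of which only the entries with indices in {1..n} are relevant.\<close>

definition nonneg_matrix :: "nat \<Rightarrow> (nat \<Rightarrow> nat \<Rightarrow> 'a::linordered_ab_group_add) \<Rightarrow> bool" where
  "nonneg_matrix n T \<longleftrightarrow> (\<forall>i\<in>{1..n}. \<forall>j\<in>{1..n}. T i j \<ge> 0)"

definition sum_symmetric :: "nat \<Rightarrow> (nat \<Rightarrow> nat \<Rightarrow> 'a::linordered_ab_group_add) \<Rightarrow> bool" where
  "sum_symmetric n T \<longleftrightarrow>
     (\<forall>i\<in>{1..n}. (\<Sum>j\<in>{1..n}. T i j) = (\<Sum>j\<in>{1..n}. T j i))"

definition cyclic_perm_on :: "(nat \<Rightarrow> nat) \<Rightarrow> nat set \<Rightarrow> bool" where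
  "cyclic_perm_on \<pi> J \<longleftrightarrow> \<pi> permutes J \<and> (\<forall>x\<in>J. \<forall>y\<in>J. \<exists>k. (\<pi> ^^ k) x = y)"

definition circuit_matrix_with ::
  "nat \<Rightarrow> nat set \<Rightarrow> (nat \<Rightarrow> nat) \<Rightarrow> 'a::linordered_ab_group_add \<Rightarrow> (nat \<Rightarrow> nat \<Rightarrow> 'a) \<Rightarrow> bool" where
  "circuit_matrix_with n J \<pi> c C \<longleftrightarrow>
     J \<subseteq> {1..n} \<and> cyclic_perm_on \<pi> J \<and>
     (\<forall>i\<in>{1..n}. \<forall>j\<in>{1..n}. C i j = (if i \<in> J \<and> j = \<pi> i then c else 0))"

definition nonneg_circuit_matrix :: "nat \<Rightarrow> (nat \<Rightarrow> nat \<Rightarrow> 'a::linordered_ab_group_add) \<Rightarrow> bool" where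
  "nonneg_circuit_matrix n C \<longleftrightarrow> (\<exists>J \<pi> c. c \<ge> 0 \<and> circuit_matrix_with n J \<pi> c C)"

end

theory Submission imports Defs begin

lemma cycle_exists:
  assumes "finite V" "v \<in> V" "\<And>i. i \<in> V \<Longrightarrow> f i \<in> V"
  shows "\<exists>x p. x \<in> V \<and> p > 0 \<and> (f ^^ p) x = x"
proof -
  have inV: "(f ^^ k) v \<in> V" for k by (induction k) (auto simp: assms)
  have "\<not> inj_on (\<lambda>k. (f ^^ k) v) {..card V}"
  proof
    assume "inj_on (\<lambda>k. (f ^^ k) v) {..card V}"
    from card_inj_on_le[OF this _ assms(1)] inV have "card {..card V} \<le> card V" by blast
    then show False by simp
  qed
  then obtain a b where ab: "a \<noteq> b" "(f ^^ a) v = (f ^^ b) v"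
    unfolding inj_on_def by blast
  show ?thesis
  proof (cases "a < b")
    case True
    have "(f ^^ (b - a)) ((f ^^ a) v) = (f ^^ a) v"
    proof -
      have "(f ^^ (b - a)) ((f ^^ a) v) = (f ^^ (b - a + a)) v" by (simp add: funpow_add)
      also have "b - a + a = b" using ab True by simp
      finally show ?thesis using ab by simp
    qed
    then show ?thesis using True inV by (intro exI[of _ "(f ^^ a) v"] exI[of _ "b - a"]) auto
  next
    case False
    then have "b < a" using ab by simp
    have "(f ^^ (a - b)) ((f ^^ b) v) = (f ^^ b) v"
    proof -
      have "(f ^^ (a - b)) ((f ^^ b) v) = (f ^^ (a - b + b)) v" by (simp add: funpow_add)
      also have "a - b + b = a" using ab \<open>b < a\<close> by simp
      finally show ?thesis using ab by simp
    qed
    then show ?thesis using \<open>b < a\<close> inV by (intro exI[of _ "(f ^^ b) v"] exI[of _ "a - b"]) auto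
  qed
qed

lemma perm_from_cycle:
  assumes "finite V" "x \<in> V" "p > 0" "(f ^^ p) x = x" "\<And>i. i \<in> V \<Longrightarrow> f i \<in> V"
  defines "J \<equiv> range (\<lambda>k. (f ^^ k) x)"
  defines "\<pi> \<equiv> (\<lambda>y. if y \<in> J then f y else y)"
  shows "cyclic_perm_on \<pi> J \<and> J \<subseteq> V \<and> x \<in> J \<and> (\<forall>y\<in>J. \<pi> y = f y)"
proof -
  have JV: "J \<subseteq> V" unfolding J_def
  proof safe
    fix k show "(f ^^ k) x \<in> V" by (induction k) (auto simp: assms)
  qed
  have finJ: "finite J" using JV assms(1) finite_subset by blast
  have xJ: "x \<in> J" unfolding J_def by (metis rangeI funpow_0)
  have closed: "f y \<in> J" if yJ: "y \<in> J" for y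
  proof -
    obtain k where "y = (f ^^ k) x" using yJ unfolding J_def by auto
    then have "f y = (f ^^ Suc k) x" by simp
    then show ?thesis unfolding J_def by blast
  qed
  have img: "\<pi> ` J = J"
  proof
    show "\<pi> ` J \<subseteq> J" using closed \<pi>_def by auto
    show "J \<subseteq> \<pi> ` J"
    proof
      fix y assume "y \<in> J"
      then obtain k where k: "y = (f ^^ k) x" unfolding J_def by auto
      show "y \<in> \<pi> ` J"
      proof (cases k)
        case 0
        have "y = f ((f ^^ (p - 1)) x)" using k 0 assms(3,4)
          by (metis Suc_pred' comp_apply funpow.simps(2) funpow_0)
        moreover have "(f ^^ (p - 1)) x \<in> J" unfolding J_def by auto
        ultimately show ?thesis unfolding \<pi>_def by auto
      next
        case (Suc m)
        have "y = f ((f ^^ m) x)" using k Suc by simp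
        moreover have "(f ^^ m) x \<in> J" unfolding J_def by auto
        ultimately show ?thesis unfolding \<pi>_def by auto
      qed
    qed
  qed
  have bij: "bij_betw \<pi> J J"
  proof -
    have "inj_on \<pi> J" by (rule eq_card_imp_inj_on[OF finJ]) (simp add: img)
    then show ?thesis using img unfolding bij_betw_def by simp
  qed
  have perm: "\<pi> permutes J"
    by (rule bij_imp_permutes[OF bij]) (simp add: \<pi>_def)
  have pik: "(\<pi> ^^ k) y = (f ^^ k) y" if "y \<in> J" for k y
  proof -
    have "(\<pi> ^^ k) y = (f ^^ k) y \<and> (f ^^ k) y \<in> J" for k
      by (induction k) (auto simp: that \<pi>_def closed)
    then show ?thesis by blast
  qed
  have period: "(f ^^ (p * m)) x = x" for m
    by (induction m) (simp_all add: funpow_add assms(4))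
  have reach: "\<exists>k. (\<pi> ^^ k) y = z" if yz: "y \<in> J" "z \<in> J" for y z
  proof -
    obtain a b where a: "y = (f ^^ a) x" and b: "z = (f ^^ b) x"
      using yz unfolding J_def by auto
    have "(f ^^ ((p - 1) * a + b)) y = (f ^^ ((p - 1) * a + b + a)) x"
      by (simp add: a funpow_add)
    also have "(p - 1) * a + b + a = b + p * a"
      using assms(3) by (cases p) auto
    also have "(f ^^ (b + p * a)) x = z"
      by (simp add: funpow_add period b)
    finally show ?thesis using pik[OF yz(1)] by metis
  qed
  show ?thesis
    using perm reach JV xJ unfolding cyclic_perm_on_def \<pi>_def by auto
qed

lemma main:
  fixes T :: "nat \<Rightarrow> nat \<Rightarrow> 'a::linordered_ab_group_add"
  assumes "card {(i,j). i \<in> {1..n} \<and> j \<in> {1..n} \<and> T i j \<noteq> 0} = m"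
    and "nonneg_matrix n T" and "sum_symmetric n T"
  shows "\<exists>Cs :: (nat \<Rightarrow> nat \<Rightarrow> 'a) list.
           (\<forall>C\<in>set Cs. nonneg_circuit_matrix n C) \<and>
           (\<forall>i\<in>{1..n}. \<forall>j\<in>{1..n}. T i j = (\<Sum>C\<leftarrow>Cs. C i j))"
  using assms
proof (induction m arbitrary: T rule: less_induct)
  case (less m T)
  note nn = less.prems(2)[unfolded nonneg_matrix_def]
  note ss = less.prems(3)[unfolded sum_symmetric_def]
  show ?case
  proof (cases "\<exists>i\<in>{1..n}. \<exists>j\<in>{1..n}. T i j \<noteq> 0")
    case False
    then show ?thesis by (intro exI[of _ "[]"]) auto
  next
    case True
    then obtain i0 j0 where ij0: "i0 \<in> {1..n}" "j0 \<in> {1..n}" "T i0 j0 > 0"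
      using nn by (metis order_le_less)
    define V where "V = {i \<in> {1..n}. \<exists>j\<in>{1..n}. T j i > 0}"
    have finV: "finite V" unfolding V_def by auto
    have j0V: "j0 \<in> V" using ij0 unfolding V_def by auto
    have out: "\<exists>j\<in>{1..n}. T i j > 0" if "i \<in> V" for i
    proof -
      from that obtain j where j: "j \<in> {1..n}" "T j i > 0" "i \<in> {1..n}" unfolding V_def by auto
      have "T j i \<le> (\<Sum>k\<in>{1..n}. T k i)"
        by (rule sum_nonneg_leq_bound[OF _ _ refl]) (use j nn in auto)
      then have "(\<Sum>k\<in>{1..n}. T i k) > 0" using ss j by auto
      show ?thesis
      proof (rule ccontr)
        assume "\<not> ?thesis"
        then have "\<And>k. k \<in> {1..n} \<Longrightarrow> T i k \<le> 0" by (auto simp: not_less)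
        then have "(\<Sum>k\<in>{1..n}. T i k) \<le> 0" by (rule sum_nonpos)
        with \<open>(\<Sum>k\<in>{1..n}. T i k) > 0\<close> show False by simp
      qed
    qed
    define f where "f i = (SOME j. j \<in> {1..n} \<and> T i j > 0)" for i
    have f: "f i \<in> {1..n} \<and> T i (f i) > 0" if "i \<in> V" for i
    proof -
      from out[OF that] obtain j where "j \<in> {1..n} \<and> T i j > 0" by blast
      then show ?thesis unfolding f_def by (rule someI)
    qed
    have fV: "f i \<in> V" if "i \<in> V" for i
    proof -
      have i: "i \<in> {1..n}" using that unfolding V_def by blast
      have fi: "f i \<in> {1..n}" "T i (f i) > 0" using f[OF that] by blast+
      have ex: "\<exists>j\<in>{1..n}. T j (f i) > 0" using i fi(2) by (rule bexI[rotated])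
      show ?thesis unfolding V_def mem_Collect_eq using fi(1) ex by (rule conjI)
    qed
    obtain x p where xp: "x \<in> V" "p > 0" "(f ^^ p) x = x"
    proof -
      from cycle_exists[OF finV j0V fV] obtain x0 where "\<exists>p. x0 \<in> V \<and> p > 0 \<and> (f ^^ p) x0 = x0" by (rule exE)
      then obtain p0 where "x0 \<in> V \<and> p0 > 0 \<and> (f ^^ p0) x0 = x0" by (rule exE)
      then show ?thesis using that by (elim conjE)
    qed
    define J where "J = range (\<lambda>k. (f ^^ k) x)"
    define \<pi> where "\<pi> = (\<lambda>y. if y \<in> J then f y else y)"
    have cyc: "cyclic_perm_on \<pi> J" and JV: "J \<subseteq> V" and xJ: "x \<in> J" and pif: "\<forall>y\<in>J. \<pi> y = f y"
      using perm_from_cycle[OF finV xp fV] unfolding J_def \<pi>_def by blast+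
    have perm: "\<pi> permutes J" using cyc unfolding cyclic_perm_on_def by blast
    have Jn: "J \<subseteq> {1..n}" using JV unfolding V_def by auto
    have finJ: "finite J" using Jn finite_subset by blast
    have posJ: "T i (\<pi> i) > 0" "\<pi> i \<in> {1..n}" if "i \<in> J" for i
      using f[of i] pif that JV by auto
    define c where "c = Min ((\<lambda>i. T i (\<pi> i)) ` J)"
    have cin: "c \<in> (\<lambda>i. T i (\<pi> i)) ` J" unfolding c_def using finJ xJ by (intro Min_in) auto
    then obtain i1 where i1: "i1 \<in> J" "T i1 (\<pi> i1) = c" by auto
    have cpos: "c > 0" using posJ i1 by auto
    have cle: "c \<le> T i (\<pi> i)" if "i \<in> J" for i unfolding c_def using finJ that by (intro Min_le) auto
    define C :: "nat \<Rightarrow> nat \<Rightarrow> 'a" where "C = (\<lambda>i j. if i \<in> J \<and> j = \<pi> i then c else 0)"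
    define T' where "T' = (\<lambda>i j. T i j - C i j)"
    have Ccirc: "nonneg_circuit_matrix n C"
      unfolding nonneg_circuit_matrix_def circuit_matrix_with_def C_def
      using cpos Jn cyc by (intro exI[of _ J] exI[of _ \<pi>] exI[of _ c]) auto
    have nn': "nonneg_matrix n T'"
      unfolding nonneg_matrix_def T'_def C_def using nn cle by auto
    have rowC: "(\<Sum>j\<in>{1..n}. C i j) = (if i \<in> J then c else 0)" if "i \<in> {1..n}" for i
    proof (cases "i \<in> J")
      case True
      then have "(\<Sum>j\<in>{1..n}. C i j) = (\<Sum>j\<in>{1..n}. if j = \<pi> i then c else 0)"
        unfolding C_def by (intro sum.cong) auto
      also have "\<dots> = c" using posJ(2)[OF True] by (simp add: sum.delta')
      finally show ?thesis using True by simp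
    qed (simp add: C_def)
    have colC: "(\<Sum>j\<in>{1..n}. C j i) = (if i \<in> J then c else 0)" if "i \<in> {1..n}" for i
    proof -
      have eq: "(j \<in> J \<and> i = \<pi> j) \<longleftrightarrow> (i \<in> J \<and> j = inv \<pi> i)" for j
      proof
        assume a: "j \<in> J \<and> i = \<pi> j"
        then have "i \<in> J" using permutes_in_image[OF perm] by simp
        moreover have "inv \<pi> i = j" using a permutes_inverses(2)[OF perm] by simp
        ultimately show "i \<in> J \<and> j = inv \<pi> i" by simp
      next
        assume a: "i \<in> J \<and> j = inv \<pi> i"
        then have "j \<in> J" using permutes_in_image[OF permutes_inv[OF perm]] by simp
        moreover have "\<pi> j = i" using a permutes_inverses(1)[OF perm] by simp
        ultimately show "j \<in> J \<and> i = \<pi> j" by simp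
      qed
      have "(\<Sum>j\<in>{1..n}. C j i) = (\<Sum>j\<in>{1..n}. if i \<in> J \<and> j = inv \<pi> i then c else 0)"
        unfolding C_def using eq by (intro sum.cong) auto
      also have "\<dots> = (if i \<in> J then c else 0)"
      proof (cases "i \<in> J")
        case True
        then have "inv \<pi> i \<in> J" using permutes_in_image[OF permutes_inv[OF perm]] by simp
        then have "inv \<pi> i \<in> {1..n}" by (rule subsetD[OF Jn])
        then show ?thesis using True by (simp add: sum.delta')
      qed simp
      finally show ?thesis .
    qed
    have ss': "sum_symmetric n T'"
      unfolding sum_symmetric_def T'_def
      using ss rowC colC by (simp add: sum_subtractf)
    define S where "S T = {(i,j). i \<in> {1..n} \<and> j \<in> {1..n} \<and> T i j \<noteq> (0::'a)}" for T
    have "S T' \<subset> S T"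
    proof
      show "S T' \<subseteq> S T"
      proof -
        have supp: "T i j \<noteq> 0" if "T' i j \<noteq> 0" for i j
        proof (cases "i \<in> J \<and> j = \<pi> i")
          case True
          then have "c \<le> T i j" using cle by auto
          with cpos show ?thesis by auto
        next
          case False
          then have "C i j = 0" unfolding C_def by (simp only: if_False)
          then show ?thesis using that unfolding T'_def by simp
        qed
        show ?thesis unfolding S_def using supp by auto
      qed
      have "(i1, \<pi> i1) \<in> S T" unfolding S_def using posJ[OF i1(1)] Jn i1 by auto
      moreover have "(i1, \<pi> i1) \<notin> S T'" unfolding S_def T'_def C_def using i1 by auto
      ultimately show "S T' \<noteq> S T" by blast
    qed
    then have "card (S T') < card (S T)" by (rule psubset_card_mono[rotated])
      (rule finite_subset[of _ "{1..n} \<times> {1..n}"], auto simp: S_def)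
    then have "card (S T') < m" using less.prems(1) unfolding S_def by simp
    from less.IH[OF this _ nn' ss'] obtain Cs where Cs:
      "\<forall>C\<in>set Cs. nonneg_circuit_matrix n C"
      "\<forall>i\<in>{1..n}. \<forall>j\<in>{1..n}. T' i j = (\<Sum>C\<leftarrow>Cs. C i j)" unfolding S_def by blast
    show ?thesis
    proof (intro exI[of _ "C # Cs"] conjI)
      show "\<forall>C\<in>set (C # Cs). nonneg_circuit_matrix n C" using Cs Ccirc by auto
      show "\<forall>i\<in>{1..n}. \<forall>j\<in>{1..n}. T i j = (\<Sum>C\<leftarrow>C # Cs. C i j)"
        using Cs(2) unfolding T'_def by (auto simp: algebra_simps)
    qed
  qed
qed

theorem theorem1:
  fixes n :: nat and T :: "nat \<Rightarrow> nat \<Rightarrow> 'a::linordered_ab_group_add"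
  assumes "nonneg_matrix n T" and "sum_symmetric n T"
  shows "\<exists>Cs :: (nat \<Rightarrow> nat \<Rightarrow> 'a) list.
           (\<forall>C\<in>set Cs. nonneg_circuit_matrix n C) \<and>
           (\<forall>i\<in>{1..n}. \<forall>j\<in>{1..n}. T i j = (\<Sum>C\<leftarrow>Cs. C i j))"
  using main[OF refl assms] .

end
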